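(* Let $\mathcal F\subseteq\mathcal G$ be two prime lattice filters of an MV-algebra $\mathcal L$ with $\mathcal K(\mathcal F)=\mathcal K(\mathcal G)$. Then $$\mathcal K(\mathcal F\sqsubseteq\!\!\to\mathcal G)=\mathcal K(\mathcal F).$$
   Context: $\mathcal L=(L,\oplus,\lnot,0)$ is an MV-algebra. We write $1=\lnot 0$, $x\otimes y=\lnot(\lnot x\oplus\lnot y)$, and $x\to y=\lnot x\oplus y$, and use the usual lattice order. A lattice filter is a nonempty upward-closed subset closed under $\wedge$. It is prime if it is proper and $a\vee b\in\mathcal F$ implies $a\in\mathcal F$ or $b\in\mathcal F$. For an upward-closed $\mathcal F$ and $a\in L$, let $\mathcal F_a=\{z: z\to a\notin\mathcal F\}$. The kernel is $\mathcal K(\mathcal F)=\{z:\forall a\notin\mathcal F,\ z\to a\notin\mathcal F\}$. For $\mathcal F\subseteq\mathcal G$ we put $\mathcal F\sqsubseteq\!\!\to\mathcal G=\bigcap_{a\in L\setminus\mathcal G}\mathcal F_a$. *)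

theory Defs
  imports Main
begin

definition mv_algebra :: "'a set \<Rightarrow> ('a \<Rightarrow> 'a \<Rightarrow> 'a) \<Rightarrow> ('a \<Rightarrow> 'a) \<Rightarrow> 'a \<Rightarrow> bool" where
  "mv_algebra L pl ng z \<longleftrightarrow>
     z \<in> L \<and>
     (\<forall>x\<in>L. \<forall>y\<in>L. pl x y \<in> L) \<and>
     (\<forall>x\<in>L. ng x \<in> L) \<and>
     (\<forall>x\<in>L. \<forall>y\<in>L. \<forall>w\<in>L. pl x (pl y w) = pl (pl x y) w) \<and>
     (\<forall>x\<in>L. \<forall>y\<in>L. pl x y = pl y x) \<and>
     (\<forall>x\<in>L. pl x z = x) \<and>
     (\<forall>x\<in>L. ng (ng x) = x) \<and>
     (\<forall>x\<in>L. pl x (ng z) = ng z) \<and>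
     (\<forall>x\<in>L. \<forall>y\<in>L. pl (ng (pl (ng x) y)) y = pl (ng (pl (ng y) x)) x)"

definition mv_one :: "('a \<Rightarrow> 'a) \<Rightarrow> 'a \<Rightarrow> 'a" where
  "mv_one ng z = ng z"

definition mv_imp :: "('a \<Rightarrow> 'a \<Rightarrow> 'a) \<Rightarrow> ('a \<Rightarrow> 'a) \<Rightarrow> 'a \<Rightarrow> 'a \<Rightarrow> 'a" where
  "mv_imp pl ng x y = pl (ng x) y"

definition mv_le :: "('a \<Rightarrow> 'a \<Rightarrow> 'a) \<Rightarrow> ('a \<Rightarrow> 'a) \<Rightarrow> 'a \<Rightarrow> 'a \<Rightarrow> 'a \<Rightarrow> bool" where
  "mv_le pl ng z x y \<longleftrightarrow> mv_imp pl ng x y = mv_one ng z"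

definition mv_sup :: "('a \<Rightarrow> 'a \<Rightarrow> 'a) \<Rightarrow> ('a \<Rightarrow> 'a) \<Rightarrow> 'a \<Rightarrow> 'a \<Rightarrow> 'a" where
  "mv_sup pl ng x y = pl (ng (pl (ng x) y)) y"

definition mv_inf :: "('a \<Rightarrow> 'a \<Rightarrow> 'a) \<Rightarrow> ('a \<Rightarrow> 'a) \<Rightarrow> 'a \<Rightarrow> 'a \<Rightarrow> 'a" where
  "mv_inf pl ng x y = ng (mv_sup pl ng (ng x) (ng y))"

definition up_closed :: "'a set \<Rightarrow> ('a \<Rightarrow> 'a \<Rightarrow> 'a) \<Rightarrow> ('a \<Rightarrow> 'a) \<Rightarrow> 'a \<Rightarrow> 'a set \<Rightarrow> bool" where
  "up_closed L pl ng z F \<longleftrightarrow> F \<subseteq> L \<and>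
     (\<forall>x\<in>F. \<forall>y\<in>L. mv_le pl ng z x y \<longrightarrow> y \<in> F)"

definition lattice_filter :: "'a set \<Rightarrow> ('a \<Rightarrow> 'a \<Rightarrow> 'a) \<Rightarrow> ('a \<Rightarrow> 'a) \<Rightarrow> 'a \<Rightarrow> 'a set \<Rightarrow> bool" where
  "lattice_filter L pl ng z F \<longleftrightarrow> F \<noteq> {} \<and> up_closed L pl ng z F \<and>
     (\<forall>x\<in>F. \<forall>y\<in>F. mv_inf pl ng x y \<in> F)"

definition prime_filter :: "'a set \<Rightarrow> ('a \<Rightarrow> 'a \<Rightarrow> 'a) \<Rightarrow> ('a \<Rightarrow> 'a) \<Rightarrow> 'a \<Rightarrow> 'a set \<Rightarrow> bool" where
  "prime_filter L pl ng z F \<longleftrightarrow> lattice_filter L pl ng z F \<and> F \<noteq> L \<and>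
     (\<forall>a\<in>L. \<forall>b\<in>L. mv_sup pl ng a b \<in> F \<longrightarrow> a \<in> F \<or> b \<in> F)"

definition filt_sub :: "'a set \<Rightarrow> ('a \<Rightarrow> 'a \<Rightarrow> 'a) \<Rightarrow> ('a \<Rightarrow> 'a) \<Rightarrow> 'a set \<Rightarrow> 'a \<Rightarrow> 'a set" where
  "filt_sub L pl ng F a = {w \<in> L. mv_imp pl ng w a \<notin> F}"

definition kernel :: "'a set \<Rightarrow> ('a \<Rightarrow> 'a \<Rightarrow> 'a) \<Rightarrow> ('a \<Rightarrow> 'a) \<Rightarrow> 'a set \<Rightarrow> 'a set" where
  "kernel L pl ng F = {w \<in> L. \<forall>a \<in> L - F. mv_imp pl ng w a \<notin> F}"

text \<open>F \<sqsubseteq>\<rightarrow> G = \<Inter>_{a \<in> L - G} F_a (intersection taken inside L)\<close>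
definition filt_arrow :: "'a set \<Rightarrow> ('a \<Rightarrow> 'a \<Rightarrow> 'a) \<Rightarrow> ('a \<Rightarrow> 'a) \<Rightarrow> 'a set \<Rightarrow> 'a set \<Rightarrow> 'a set" where
  "filt_arrow L pl ng F G = L \<inter> (\<Inter>a \<in> L - G. filt_sub L pl ng F a)"

end

theory Submission
  imports Defs
begin

locale mvl = fixes L :: "'a set" and pl :: "'a \<Rightarrow> 'a \<Rightarrow> 'a" and ng :: "'a \<Rightarrow> 'a" and z :: 'a
  assumes mv: "mv_algebra L pl ng z"
begin

lemma z_in[simp]: "z \<in> L" using mv unfolding mv_algebra_def by blast
lemma pl_in[simp]: "x \<in> L \<Longrightarrow> y \<in> L \<Longrightarrow> pl x y \<in> L" using mv unfolding mv_algebra_def by blast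
lemma ng_in[simp]: "x \<in> L \<Longrightarrow> ng x \<in> L" using mv unfolding mv_algebra_def by blast
lemma assoc: "x \<in> L \<Longrightarrow> y \<in> L \<Longrightarrow> w \<in> L \<Longrightarrow> pl x (pl y w) = pl (pl x y) w" using mv unfolding mv_algebra_def by blast
lemma comm: "x \<in> L \<Longrightarrow> y \<in> L \<Longrightarrow> pl x y = pl y x" using mv unfolding mv_algebra_def by blast
lemma zr[simp]: "x \<in> L \<Longrightarrow> pl x z = x" using mv unfolding mv_algebra_def by blast
lemma nn[simp]: "x \<in> L \<Longrightarrow> ng (ng x) = x" using mv unfolding mv_algebra_def by blast
lemma oner[simp]: "x \<in> L \<Longrightarrow> pl x (ng z) = ng z" using mv unfolding mv_algebra_def by blast
lemma mv6: "x \<in> L \<Longrightarrow> y \<in> L \<Longrightarrow> pl (ng (pl (ng x) y)) y = pl (ng (pl (ng y) x)) x" using mv unfolding mv_algebra_def by blast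

lemma zl[simp]: "x \<in> L \<Longrightarrow> pl z x = x" using comm zr by (metis z_in)
lemma onel[simp]: "x \<in> L \<Longrightarrow> pl (ng z) x = ng z" using comm oner by (metis z_in ng_in)
lemma compl[simp]: "x \<in> L \<Longrightarrow> pl (ng x) x = ng z"
proof -
  assume x: "x \<in> L"
  have "ng z = pl (ng x) x" using mv6[OF x, of "ng z"] x by simp
  thus ?thesis by (rule sym)
qed
lemma compl2[simp]: "x \<in> L \<Longrightarrow> pl x (ng x) = ng z" using compl comm by (metis ng_in)

definition le where "le x y \<longleftrightarrow> pl (ng x) y = ng z"

lemma le_ex: "x \<in> L \<Longrightarrow> y \<in> L \<Longrightarrow> le x y \<longleftrightarrow> (\<exists>d\<in>L. y = pl x d)"
proof
  assume x: "x \<in> L" and y: "y \<in> L" and h: "le x y"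
  have "pl (ng (pl (ng y) x)) x = pl (ng (pl (ng x) y)) y" using mv6[OF x y] by simp
  also have "\<dots> = y" using h y by (simp add: le_def)
  finally have "y = pl x (ng (pl (ng y) x))" using x y comm by simp
  moreover have "ng (pl (ng y) x) \<in> L" using x y by simp
  ultimately show "\<exists>d\<in>L. y = pl x d" by blast
next
  assume x: "x \<in> L" and y: "y \<in> L" and "\<exists>d\<in>L. y = pl x d"
  then obtain d where d: "d \<in> L" "y = pl x d" by blast
  show "le x y" using d x by (simp add: assoc le_def)
qed

lemma le_refl: "x \<in> L \<Longrightarrow> le x x" by (simp add: le_def)
lemma le_one: "x \<in> L \<Longrightarrow> le x (ng z)" by (simp add: le_def)

lemma le_trans: assumes "x \<in> L" "y \<in> L" "w \<in> L" "le x y" "le y w" shows "le x w"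
proof -
  obtain d1 where d1: "d1 \<in> L" "y = pl x d1" using assms le_ex by blast
  obtain d2 where d2: "d2 \<in> L" "w = pl y d2" using assms le_ex by blast
  have "w = pl x (pl d1 d2)" using d1 d2 assms by (simp add: assoc)
  thus ?thesis using assms d1 d2 le_ex pl_in by blast
qed

lemma le_antisym: assumes "x \<in> L" "y \<in> L" "le x y" "le y x" shows "x = y"
  using mv6[of x y] assms by (simp add: le_def)

lemma pl_mono: assumes "x \<in> L" "y \<in> L" "w \<in> L" "le x y" shows "le (pl x w) (pl y w)"
proof -
  obtain d where d: "d \<in> L" "y = pl x d" using assms le_ex by blast
  have "pl y w = pl (pl x d) w" using d by simp
  also have "\<dots> = pl x (pl d w)" using d assms by (simp add: assoc)
  also have "\<dots> = pl x (pl w d)" using d assms comm[of d w] by simp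
  also have "\<dots> = pl (pl x w) d" using d assms by (simp add: assoc)
  finally show ?thesis using d assms le_ex pl_in by blast
qed

lemma ng_anti: assumes "x \<in> L" "y \<in> L" "le x y" shows "le (ng y) (ng x)"
  using assms comm[of "ng x" y] by (simp add: le_def)

lemma pl_ub: "x \<in> L \<Longrightarrow> y \<in> L \<Longrightarrow> le x (pl x y)" by (simp add: le_def assoc)
lemma pl_ub2: "x \<in> L \<Longrightarrow> y \<in> L \<Longrightarrow> le y (pl x y)" using pl_ub[of y x] comm[of x y] by simp

abbreviation od where "od x y \<equiv> ng (pl (ng x) (ng y))"
abbreviation sp where "sp x y \<equiv> pl (ng (pl (ng x) y)) y"
abbreviation imp where "imp x y \<equiv> pl (ng x) y"

lemma od_comm: "x \<in> L \<Longrightarrow> y \<in> L \<Longrightarrow> od x y = od y x" using comm[of "ng x" "ng y"] by simp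
lemma od_assoc: "x \<in> L \<Longrightarrow> y \<in> L \<Longrightarrow> w \<in> L \<Longrightarrow> od (od x y) w = od x (od y w)"
  using assoc[of "ng x" "ng y" "ng w"] by simp
lemma od_mono: assumes "x \<in> L" "y \<in> L" "w \<in> L" "le x y" shows "le (od x w) (od y w)"
proof -
  have "le (ng y) (ng x)" using ng_anti assms by blast
  hence "le (pl (ng y) (ng w)) (pl (ng x) (ng w))" using pl_mono assms by simp
  thus ?thesis using ng_anti assms by simp
qed
lemma od_le: assumes "x \<in> L" "y \<in> L" shows "le (od x y) x"
proof -
  have "le (ng x) (pl (ng x) (ng y))" using pl_ub assms by simp
  thus ?thesis using ng_anti[of "ng x" "pl (ng x) (ng y)"] assms by simp
qed
lemma od_le2: assumes "x \<in> L" "y \<in> L" shows "le (od x y) y"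
  using od_le[of y x] od_comm[of x y] assms by simp
lemma resid: assumes "x \<in> L" "y \<in> L" "w \<in> L" shows "le (od x y) w \<longleftrightarrow> le x (imp y w)"
  using assms by (simp add: assoc le_def)

lemma sp_comm: "x \<in> L \<Longrightarrow> y \<in> L \<Longrightarrow> sp x y = sp y x" using mv6 by blast
lemma sp_ub2: "x \<in> L \<Longrightarrow> y \<in> L \<Longrightarrow> le y (sp x y)" using pl_ub2 by simp
lemma sp_ub1: "x \<in> L \<Longrightarrow> y \<in> L \<Longrightarrow> le x (sp x y)" using sp_ub2[of y x] sp_comm[of x y] by simp

lemma mp: assumes "x \<in> L" "y \<in> L" shows "le (od x (imp x y)) y"
  using resid[of x "imp x y" y] sp_ub1[of x y] assms by simp

lemma sp_lub: assumes x: "x \<in> L" and y: "y \<in> L" and w: "w \<in> L" and "le x w" "le y w" shows "le (sp x y) w"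
proof -
  have 1: "le (ng w) (ng x)" using ng_anti assms by blast
  have 2: "le (pl (ng w) y) (pl (ng x) y)" using pl_mono[OF _ _ _ 1] assms by simp
  have 3: "le (ng (pl (ng x) y)) (ng (pl (ng w) y))" using ng_anti[OF _ _ 2] assms by simp
  have 4: "le (pl (ng (pl (ng x) y)) y) (pl (ng (pl (ng w) y)) y)" using pl_mono[OF _ _ _ 3] assms by simp
  have 5: "pl (ng (pl (ng w) y)) y = w" using mv6[of w y] assms by (simp add: le_def)
  show ?thesis using 4 5 by simp
qed

lemma sp_mono: assumes "x \<in> L" "y \<in> L" "x' \<in> L" "y' \<in> L" "le x x'" "le y y'" shows "le (sp x y) (sp x' y')"
proof (rule sp_lub)
  show "le x (sp x' y')" using le_trans[of x x' "sp x' y'"] sp_ub1[of x' y'] assms by simp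
  show "le y (sp x' y')" using le_trans[of y y' "sp x' y'"] sp_ub2[of x' y'] assms by simp
qed (use assms in auto)

lemma imp_mono2: assumes "x \<in> L" "y \<in> L" "y' \<in> L" "le y y'" shows "le (imp x y) (imp x y')"
  using pl_mono[of y y' "ng x"] assms comm[of y "ng x"] comm[of y' "ng x"] by simp
lemma imp_anti1: assumes "x \<in> L" "x' \<in> L" "y \<in> L" "le x x'" shows "le (imp x' y) (imp x y)"
  using pl_mono[of "ng x'" "ng x" y] ng_anti[of x x'] assms by simp

lemma meet_comm: assumes a: "a \<in> L" and b: "b \<in> L" shows "od a (imp a b) = od b (imp b a)"
proof -
  have "sp (ng b) (ng a) = sp (ng a) (ng b)" by (rule sp_comm) (simp_all add: assms)
  hence "ng (sp (ng b) (ng a)) = ng (sp (ng a) (ng b))" by simp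
  moreover have "ng (sp (ng b) (ng a)) = od a (imp a b)"
    using comm[of b "ng a"] comm[of "ng (pl (ng a) b)" "ng a"] a b by simp
  moreover have "ng (sp (ng a) (ng b)) = od b (imp b a)"
    using comm[of a "ng b"] comm[of "ng (pl (ng b) a)" "ng b"] a b by simp
  ultimately show ?thesis by simp
qed

lemma prelin: assumes x: "x \<in> L" and y: "y \<in> L" shows "sp (imp x y) (imp y x) = ng z"
proof -
  define p where "p = ng (imp x y)"
  define q where "q = ng (imp y x)"
  define Z where "Z = pl x p"
  have pL: "p \<in> L" and qL: "q \<in> L" and ZL: "Z \<in> L" using assms by (auto simp: p_def q_def Z_def)
  have e1: "ng (sp (imp x y) (imp y x)) = od q (imp q p)"
    using assms comm[of "imp x y" "imp y x"] comm[of "ng (imp x y)" "imp y x"]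
      comm[of "ng (pl (imp y x) (ng (imp x y)))" "imp y x"] by (simp add: p_def q_def)
  have e2: "imp q p = pl (ng y) Z" using assms pL by (simp add: q_def Z_def assoc)
  have e3: "q = od y (ng x)" using assms by (simp add: q_def)
  have "od q (imp q p) = od (od y (ng x)) (imp y Z)" using e2 e3 by simp
  also have "\<dots> = od (od (ng x) y) (imp y Z)" using od_comm[of y "ng x"] assms by simp
  also have "\<dots> = od (ng x) (od y (imp y Z))" using od_assoc[of "ng x" y "imp y Z"] assms ZL by simp
  also have "\<dots> = od (ng x) (od Z (imp Z y))" using meet_comm[of y Z] assms ZL by simp
  also have "\<dots> = od (od (ng x) Z) (imp Z y)" using od_assoc[of "ng x" Z "imp Z y"] assms ZL by simp
  finally have e4: "od q (imp q p) = od (od (ng x) Z) (imp Z y)" .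
  have "od (ng x) Z = od (ng x) (imp (ng x) p)" using assms by (simp add: Z_def)
  also have "\<dots> = od p (imp p (ng x))" using meet_comm[of "ng x" p] assms pL by simp
  finally have e5: "le (od (ng x) Z) p" using od_le[of p "imp p (ng x)"] assms pL by simp
  have l1: "le (od (od (ng x) Z) (imp Z y)) (od p (imp Z y))" using od_mono[OF _ _ _ e5] assms pL ZL by simp
  have l2: "le x Z" using pl_ub assms pL by (simp add: Z_def)
  have l3: "le (imp Z y) (imp x y)" using imp_anti1[OF _ _ _ l2] assms ZL by simp
  have l4': "le (od (imp Z y) p) (od (imp x y) p)" using od_mono[OF _ _ _ l3] assms pL ZL by simp
  have l4: "le (od p (imp Z y)) (od p (imp x y))" using l4' od_comm[of p "imp Z y"] od_comm[of p "imp x y"] assms pL ZL by simp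
  have l5: "od p (imp x y) = z" using assms by (simp add: p_def)
  have l6: "le (od q (imp q p)) (od p (imp Z y))" using e4 l1 by simp
  have "le (od q (imp q p)) z" using le_trans[OF _ _ _ l6 l4] l5 assms pL qL ZL by simp
  hence "le (ng (sp (imp x y) (imp y x))) z" using e1 by simp
  hence "le (ng z) (sp (imp x y) (imp y x))" using ng_anti[of "ng (sp (imp x y) (imp y x))" z] assms by simp
  thus ?thesis using le_antisym le_one assms by simp
qed

lemma D1: assumes x: "x \<in> L" and y: "y \<in> L" and w: "w \<in> L"
  shows "le (od x (sp y w)) (sp (od x y) (od x w))"
proof -
  define S where "S = sp (od x y) (od x w)"
  have SL: "S \<in> L" using assms by (simp add: S_def)
  have "le (od y x) S" using sp_ub1[of "od x y" "od x w"] od_comm[of x y] assms by (simp add: S_def)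
  hence 1: "le y (imp x S)" using resid[of y x S] assms SL by simp
  have "le (od w x) S" using sp_ub2[of "od x y" "od x w"] od_comm[of x w] assms by (simp add: S_def)
  hence 2: "le w (imp x S)" using resid[of w x S] assms SL by simp
  have "le (sp y w) (imp x S)" using sp_lub[OF y w _ 1 2] assms SL by simp
  hence "le (od (sp y w) x) S" using resid[of "sp y w" x S] assms SL by simp
  thus ?thesis using od_comm[of x "sp y w"] assms by (simp add: S_def)
qed

lemma trans_imp: assumes x: "x \<in> L" and y: "y \<in> L" and w: "w \<in> L"
  shows "le (od (imp x y) (imp y w)) (imp x w)"
proof -
  define A where "A = imp x y"
  define B where "B = imp y w"
  have AL: "A \<in> L" and BL: "B \<in> L" using assms by (auto simp: A_def B_def)
  have e: "od (od A B) x = od B (od x A)"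
    using od_comm[of A B] od_assoc[of B A x] od_comm[of A x] AL BL x by simp
  have 1: "le (od x A) y" using mp[of x y] assms by (simp add: A_def)
  have 2: "le (od B (od x A)) (od B y)"
    using od_mono[OF _ _ _ 1] od_comm[of B "od x A"] od_comm[of B y] AL BL assms by simp
  have 3: "le (od B y) w" using mp[of y w] od_comm[of B y] assms BL by (simp add: B_def)
  have "le (od (od A B) x) w" using e le_trans[OF _ _ _ 2 3] AL BL assms by simp
  thus ?thesis using resid[of "od A B" x w] AL BL assms by (simp add: A_def B_def)
qed

lemma I1: assumes a: "a \<in> L" and b: "b \<in> L" and w: "w \<in> L"
  shows "le (imp a b) (imp (imp w a) (imp w b))"
proof -
  have "le (od (imp w a) (imp a b)) (imp w b)" using trans_imp[of w a b] assms by simp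
  hence "le (od (imp a b) (imp w a)) (imp w b)" using od_comm[of "imp a b" "imp w a"] assms by simp
  thus ?thesis using resid[of "imp a b" "imp w a" "imp w b"] assms by simp
qed

lemma inf_imp: assumes p: "p \<in> L" and q: "q \<in> L" and r: "r \<in> L"
  shows "le (ng (sp (ng (imp p r)) (ng (imp q r)))) (imp (sp p q) r)"
proof -
  have 1: "le (od (ng r) (sp p q)) (sp (od (ng r) p) (od (ng r) q))" using D1[of "ng r" p q] assms by simp
  show ?thesis using ng_anti[OF _ _ 1] comm[of r "ng p"] comm[of r "ng q"] comm[of r "ng (sp p q)"] assms by simp
qed

lemma exch: "x \<in> L \<Longrightarrow> y \<in> L \<Longrightarrow> t \<in> L \<Longrightarrow> imp x (imp y t) = imp y (imp x t)"
  using assoc[of "ng x" "ng y" t] assoc[of "ng y" "ng x" t] comm[of "ng x" "ng y"] by simp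

lemma Kpp: assumes a: "a \<in> L" and g: "g \<in> L" and c: "c \<in> L"
  shows "le (imp c g) (sp (imp (imp (imp a g) c) a) (imp a g))"
proof -
  define m where "m = imp a g"
  define T where "T = imp m c"
  define S where "S = imp T (sp a g)"
  have mL: "m \<in> L" and TL: "T \<in> L" and SL: "S \<in> L" using assms by (auto simp: m_def T_def S_def)
  have s1: "le (imp c g) S" using I1[of c g m] assms mL by (simp add: S_def T_def m_def)
  have s2: "S = od S (sp m (imp g a))" using prelin[of a g] assms SL by (simp add: m_def)
  have s3: "le (od S (sp m (imp g a))) (sp (od S m) (od S (imp g a)))" using D1[of S m "imp g a"] assms SL mL by simp
  have s4: "le (od S m) m" using od_le2[of S m] SL mL by simp
  have s5a: "le (imp g a) (imp (sp a g) a)" using sp_ub1[of "imp g a" a] sp_comm[of a g] assms by simp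
  have s5b: "le (od S (imp g a)) (od S (imp (sp a g) a))"
    using od_mono[OF _ _ _ s5a] od_comm[of S "imp g a"] od_comm[of S "imp (sp a g) a"] assms SL by simp
  have s5c: "le (od S (imp (sp a g) a)) (imp T a)" using trans_imp[of T "sp a g" a] assms TL by (simp add: S_def)
  have s5: "le (od S (imp g a)) (imp T a)" using le_trans[OF _ _ _ s5b s5c] assms SL TL by simp
  have s6: "le (sp (od S m) (od S (imp g a))) (sp m (imp T a))" using sp_mono[OF _ _ _ _ s4 s5] assms SL mL TL by simp
  have s7: "le S (sp m (imp T a))" using s2 le_trans[OF _ _ _ s3 s6] assms SL mL TL by simp
  have s8: "le (imp c g) (sp m (imp T a))" using le_trans[OF _ _ _ s1 s7] assms SL mL TL by simp
  show ?thesis using s8 sp_comm[of m "imp T a"] mL TL assms by (simp add: T_def m_def)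
qed

lemma mvle_eq: "mv_le pl ng z x y = le x y" by (simp add: mv_le_def mv_imp_def mv_one_def le_def)

lemma upc: "up_closed L pl ng z F \<Longrightarrow> x \<in> F \<Longrightarrow> y \<in> L \<Longrightarrow> le x y \<Longrightarrow> y \<in> F"
  unfolding up_closed_def mvle_eq by blast
lemma upcL: "up_closed L pl ng z F \<Longrightarrow> F \<subseteq> L"
  unfolding up_closed_def by blast

lemma ker_iff: "w \<in> kernel L pl ng F \<longleftrightarrow> w \<in> L \<and> (\<forall>a\<in>L - F. imp w a \<notin> F)"
  unfolding kernel_def mv_imp_def by blast

lemma ker_mp: assumes "up_closed L pl ng z F" "p \<in> F" "imp p a \<in> kernel L pl ng F" "a \<in> L"
  shows "a \<in> F"
proof (rule ccontr)
  assume na: "a \<notin> F"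
  have pL: "p \<in> L" using assms upcL by blast
  have "le p (sp p a)" using sp_ub1[of p a] pL assms by simp
  hence "sp p a \<in> F" using upc[OF assms(1) assms(2)] pL assms by simp
  moreover have "imp (imp p a) a \<notin> F" using assms(3) na assms(4) unfolding ker_iff by blast
  ultimately show False by simp
qed

lemma ker_up: assumes "up_closed L pl ng z F" "p \<in> kernel L pl ng F" "q \<in> L" "le p q"
  shows "q \<in> kernel L pl ng F"
  unfolding ker_iff
proof (intro conjI ballI)
  show "q \<in> L" by fact
  fix a assume a: "a \<in> L - F"
  have pL: "p \<in> L" using assms(2) ker_iff by blast
  show "imp q a \<notin> F"
  proof
    assume "imp q a \<in> F"
    moreover have "le (imp q a) (imp p a)" using imp_anti1[of p q a] pL assms a by simp
    ultimately have "imp p a \<in> F" using upc[OF assms(1)] pL a by simp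
    thus False using assms(2) a unfolding ker_iff by blast
  qed
qed

lemma ker_one: "ng z \<in> kernel L pl ng F" unfolding ker_iff by simp

lemma ker_sp_prime: assumes pf: "prime_filter L pl ng z F" and p: "p \<in> L" and q: "q \<in> L"
  and s: "sp p q \<in> kernel L pl ng F"
  shows "p \<in> kernel L pl ng F \<or> q \<in> kernel L pl ng F"
proof (rule ccontr)
  assume "\<not> ?thesis"
  then obtain s1 t1 where s1: "s1 \<in> L - F" "imp p s1 \<in> F" and t1: "t1 \<in> L - F" "imp q t1 \<in> F"
    using p q unfolding ker_iff by blast
  have uc: "up_closed L pl ng z F" and mc: "\<forall>x\<in>F. \<forall>y\<in>F. mv_inf pl ng x y \<in> F"
    and pr: "\<forall>a\<in>L. \<forall>b\<in>L. mv_sup pl ng a b \<in> F \<longrightarrow> a \<in> F \<or> b \<in> F"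
    using pf unfolding prime_filter_def lattice_filter_def by blast+
  define r where "r = sp s1 t1"
  have rL: "r \<in> L" using s1 t1 by (simp add: r_def)
  have rF: "r \<notin> F" using pr s1 t1 unfolding r_def mv_sup_def by blast
  have "le (imp p s1) (imp p r)" using imp_mono2[of p s1 r] sp_ub1[of s1 t1] p s1 t1 rL by (simp add: r_def)
  hence 1: "imp p r \<in> F" using upc[OF uc s1(2)] p rL by simp
  have "le (imp q t1) (imp q r)" using imp_mono2[of q t1 r] sp_ub2[of s1 t1] q s1 t1 rL by (simp add: r_def)
  hence 2: "imp q r \<in> F" using upc[OF uc t1(2)] q rL by simp
  have "mv_inf pl ng (imp p r) (imp q r) \<in> F" using mc 1 2 unfolding mv_imp_def by blast
  hence "ng (sp (ng (imp p r)) (ng (imp q r))) \<in> F" unfolding mv_inf_def mv_sup_def by simp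
  hence "imp (sp p q) r \<in> F" using upc[OF uc] inf_imp[of p q r] p q rL by simp
  thus False using s rL rF unfolding ker_iff by blast
qed

lemma ker_lin: assumes pf: "prime_filter L pl ng z F" and p: "p \<in> L" and q: "q \<in> L"
  shows "imp p q \<in> kernel L pl ng F \<or> imp q p \<in> kernel L pl ng F"
  using ker_sp_prime[OF pf, of "imp p q" "imp q p"] prelin[of p q] ker_one p q by simp

lemma memH: "x \<in> filt_arrow L pl ng F G \<longleftrightarrow> x \<in> L \<and> (\<forall>b\<in>L - G. imp x b \<notin> F)"
  unfolding filt_arrow_def filt_sub_def mv_imp_def by blast

lemma main:
  assumes pF: "prime_filter L pl ng z F" and pG: "prime_filter L pl ng z G"
    and FG: "F \<subseteq> G" and KK: "kernel L pl ng F = kernel L pl ng G"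
  shows "kernel L pl ng (filt_arrow L pl ng F G) = kernel L pl ng F"
proof -
  define H where "H = filt_arrow L pl ng F G"
  have ucF: "up_closed L pl ng z F" using pF unfolding prime_filter_def lattice_filter_def by blast
  have ucG: "up_closed L pl ng z G" using pG unfolding prime_filter_def lattice_filter_def by blast
  have mH: "\<And>x. x \<in> H \<longleftrightarrow> x \<in> L \<and> (\<forall>b\<in>L - G. imp x b \<notin> F)" unfolding H_def by (rule memH)
  have Hup: "\<And>x y. x \<in> H \<Longrightarrow> y \<in> L \<Longrightarrow> le x y \<Longrightarrow> y \<in> H"
  proof -
    fix x y assume x: "x \<in> H" and y: "y \<in> L" and xy: "le x y"
    have xL: "x \<in> L" using x mH[of x] by blast
    show "y \<in> H" unfolding mH
    proof (intro conjI ballI)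
      show "y \<in> L" by fact
      fix b assume b: "b \<in> L - G"
      show "imp y b \<notin> F"
      proof
        assume "imp y b \<in> F"
        moreover have "le (imp y b) (imp x b)" using imp_anti1[of x y b] xL y b xy by simp
        ultimately have "imp x b \<in> F" using upc[OF ucF] xL b by simp
        thus False using x b mH[of x] by blast
      qed
    qed
  qed
  have "kernel L pl ng H = kernel L pl ng F"
  proof
    show "kernel L pl ng F \<subseteq> kernel L pl ng H"
    proof
      fix w assume wF: "w \<in> kernel L pl ng F"
      hence wG: "w \<in> kernel L pl ng G" using KK by simp
      have wL: "w \<in> L" using wF ker_iff by blast
      show "w \<in> kernel L pl ng H" unfolding ker_iff
      proof (intro conjI ballI)
        show "w \<in> L" by fact
        fix a assume a: "a \<in> L - H"
        then obtain b where b: "b \<in> L - G" "imp a b \<in> F" using mH[of a] by blast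
        have wbG: "imp w b \<notin> G" using wG b unfolding ker_iff by blast
        show "imp w a \<notin> H"
        proof
          assume "imp w a \<in> H"
          hence "\<forall>b'\<in>L - G. imp (imp w a) b' \<notin> F" using mH[of "imp w a"] by blast
          moreover have "imp w b \<in> L - G" using wbG wL b by simp
          ultimately have "imp (imp w a) (imp w b) \<notin> F" by blast
          moreover have "imp (imp w a) (imp w b) \<in> F"
            using upc[OF ucF b(2)] I1[of a b w] a b wL by simp
          ultimately show False by blast
        qed
      qed
    qed
  next
    show "kernel L pl ng H \<subseteq> kernel L pl ng F"
    proof
      fix w assume wH: "w \<in> kernel L pl ng H"
      have wL: "w \<in> L" using wH ker_iff by blast
      show "w \<in> kernel L pl ng F"
      proof (rule ccontr)
        assume nF: "w \<notin> kernel L pl ng F"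
        then obtain a where a: "a \<in> L - F" "imp w a \<in> F" using wL unfolding ker_iff by blast
        have "w \<notin> kernel L pl ng G" using nF KK by simp
        then obtain b where b: "b \<in> L - G" "imp w b \<in> G" using wL unfolding ker_iff by blast
        define x0 where "x0 = imp (imp w a) b"
        have x0L: "x0 \<in> L" using a b wL by (simp add: x0_def)
        have "le (imp w a) (imp x0 b)" using sp_ub1[of "imp w a" b] a b wL by (simp add: x0_def)
        hence "imp x0 b \<in> F" using upc[OF ucF a(2)] x0L b by simp
        hence x0H: "x0 \<notin> H" using mH[of x0] b by blast
        have 1: "imp w x0 \<notin> H" using wH x0H x0L unfolding ker_iff by blast
        have 2: "imp w (imp w x0) \<notin> H" using wH 1 x0L wL unfolding ker_iff by simp
        define g where "g = imp w b"
        have gL: "g \<in> L" using wL b by (simp add: g_def)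
        have gG: "g \<in> G" using b by (simp add: g_def)
        have e: "imp w (imp w x0) = imp (imp w a) (imp w g)"
          using exch[of w "imp w a" b] exch[of w "imp w a" "imp w b"] wL a b by (simp add: x0_def g_def)
        have "le (imp a g) (imp w (imp w x0))" using I1[of a g w] e a gL wL by simp
        hence "imp a g \<notin> H" using Hup 2 a gL wL x0L by auto
        then obtain c where c: "c \<in> L - G" "imp (imp a g) c \<in> F" using mH[of "imp a g"] a gL by auto
        define k where "k = imp (imp a g) c"
        have kL: "k \<in> L" using a gL c by (simp add: k_def)
        have kF: "k \<in> F" using c by (simp add: k_def)
        have "imp g c \<notin> kernel L pl ng G" using ker_mp[OF ucG gG, of c] c by blast
        hence "imp c g \<in> kernel L pl ng G" using ker_lin[OF pG, of g c] gL c by blast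
        hence "imp c g \<in> kernel L pl ng F" using KK by simp
        hence "sp (imp k a) (imp a g) \<in> kernel L pl ng F"
          using ker_up[OF ucF] Kpp[of a g c] a gL c kL by (simp add: k_def)
        hence "imp k a \<in> kernel L pl ng F \<or> imp a g \<in> kernel L pl ng F"
          using ker_sp_prime[OF pF, of "imp k a" "imp a g"] a gL kL by simp
        thus False
        proof
          assume "imp k a \<in> kernel L pl ng F"
          hence "a \<in> F" using ker_mp[OF ucF kF] a by blast
          thus False using a by blast
        next
          assume "imp a g \<in> kernel L pl ng F"
          moreover have "c \<in> L - F" using c FG by blast
          ultimately have "k \<notin> F" unfolding ker_iff k_def by blast
          thus False using kF by blast
        qed
      qed
    qed
  qed
  thus ?thesis by (simp add: H_def)
qed

end

theorem mainTheorem11: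
  fixes L :: "'a set" and pl :: "'a \<Rightarrow> 'a \<Rightarrow> 'a" and ng :: "'a \<Rightarrow> 'a" and z :: 'a
    and F G :: "'a set"
  assumes "mv_algebra L pl ng z"
    and "prime_filter L pl ng z F"
    and "prime_filter L pl ng z G"
    and "F \<subseteq> G"
    and "kernel L pl ng F = kernel L pl ng G"
  shows "kernel L pl ng (filt_arrow L pl ng F G) = kernel L pl ng F"
  using mvl.main[OF mvl.intro[OF assms(1)] assms(2-5)] .

end
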